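(* Let $G=G_+G_-$ be a unique factorization of a finite group $G$ and let $\xi,\eta:G_+\to G_-$ be group homomorphisms. Put $G_+'=\{u\xi(u^{-1}):u\in G_+\}$, $G_+''=\{\eta(u^{-1})u:u\in G_+\}$ and $F:G_+'\to G_+''$, $F(u\xi(u^{-1}))=\eta(u)u^{-1}$. Then the conjunction of the conditions (a) $G_+'$ and $G_+''$ are normal subgroups of $G$, and (b) $F$ is a group isomorphism, is equivalent to the following identities holding for all $u,v\in G_+$ and $x\in G_-$: \begin{align*} &(1)\ \xi(u)^v=\xi(u^{\eta(v)}),\qquad (2)\ {}^u\eta(v)=\eta({}^{\xi(u)}v),\qquad (3)\ uv=({}^{\xi(u)}v)(u^{\eta(v)}),\\ &(4)\ \xi({}^x u)\,x^u=x\,\xi(u),\qquad (5)\ \eta({}^x u)\,x^u=x\,\eta(u). \end{align*} Moreover, for each $i\in\{1,\dots,5\}$, identity $(i)$ (for all $u,v\in G_+$, $x\in G_-$) is equivalent to identity $(i')$ (for all $u,v\in G_+$, $x\in G_-$), where \begin{align*} &(1')\ {}^v\xi(u)=\xi({}^{\eta(v)}u),\qquad (2')\ \eta(v)^u=\eta(v^{\xi(u)}),\qquad (3')\ uv=({}^{\eta(u)}v)(u^{\xi(v)}),\\ &(4')\ {}^u x\,\xi(u^x)=\xi(u)\,x,\qquad (5')\ {}^u x\,\eta(u^x)=\eta(u)\,x. \end{align*}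
   Context: A unique factorization $G=G_+G_-$ consists of subgroups $G_+,G_-$ of $G$ such that every $g\in G$ can be written uniquely as $g=g_+g_-$ with $g_+\in G_+$, $g_-\in G_-$. For $u\in G_+$ and $x\in G_-$ define ${}^u x\in G_-$, $u^x\in G_+$, ${}^x u\in G_+$, $x^u\in G_-$ by $ux=({}^u x)(u^x)$ and $xu=({}^x u)(x^u)$ (unique factorizations in $G=G_-G_+$ and $G=G_+G_-$ respectively). *)

theory Defs
  imports "HOL-Algebra.Algebra"
begin

definition unique_factorization :: "('g, 'b) monoid_scheme \<Rightarrow> 'g set \<Rightarrow> 'g set \<Rightarrow> bool" where
  "unique_factorization G Gp Gm \<longleftrightarrow> subgroup Gp G \<and> subgroup Gm G \<and>
     (\<forall>g\<in>carrier G. \<exists>!p. fst p \<in> Gp \<and> snd p \<in> Gm \<and> g = fst p \<otimes>\<^bsub>G\<^esub> snd p)"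

definition lact_pm :: "('g, 'b) monoid_scheme \<Rightarrow> 'g set \<Rightarrow> 'g set \<Rightarrow> 'g \<Rightarrow> 'g \<Rightarrow> 'g" where
  "lact_pm G Gp Gm u x = fst (THE p. fst p \<in> Gm \<and> snd p \<in> Gp \<and> u \<otimes>\<^bsub>G\<^esub> x = fst p \<otimes>\<^bsub>G\<^esub> snd p)"

definition ract_pm :: "('g, 'b) monoid_scheme \<Rightarrow> 'g set \<Rightarrow> 'g set \<Rightarrow> 'g \<Rightarrow> 'g \<Rightarrow> 'g" where
  "ract_pm G Gp Gm u x = snd (THE p. fst p \<in> Gm \<and> snd p \<in> Gp \<and> u \<otimes>\<^bsub>G\<^esub> x = fst p \<otimes>\<^bsub>G\<^esub> snd p)"

definition lact_mp :: "('g, 'b) monoid_scheme \<Rightarrow> 'g set \<Rightarrow> 'g set \<Rightarrow> 'g \<Rightarrow> 'g \<Rightarrow> 'g" where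
  "lact_mp G Gp Gm x u = fst (THE p. fst p \<in> Gp \<and> snd p \<in> Gm \<and> x \<otimes>\<^bsub>G\<^esub> u = fst p \<otimes>\<^bsub>G\<^esub> snd p)"

definition ract_mp :: "('g, 'b) monoid_scheme \<Rightarrow> 'g set \<Rightarrow> 'g set \<Rightarrow> 'g \<Rightarrow> 'g \<Rightarrow> 'g" where
  "ract_mp G Gp Gm x u = snd (THE p. fst p \<in> Gp \<and> snd p \<in> Gm \<and> x \<otimes>\<^bsub>G\<^esub> u = fst p \<otimes>\<^bsub>G\<^esub> snd p)"

end

theory Submission
  imports Defs
begin

locale UF = group G for G (structure) +
  fixes Gp Gm
  assumes sp: "subgroup Gp G" and sm: "subgroup Gm G"
    and triv: "\<And>z. z \<in> Gp \<Longrightarrow> z \<in> Gm \<Longrightarrow> z = \<one>"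
    and ex: "\<And>g. g \<in> carrier G \<Longrightarrow> \<exists>p\<in>Gp. \<exists>m\<in>Gm. g = p \<otimes> m"
begin

lemma cp[intro]: "x \<in> Gp \<Longrightarrow> x \<in> carrier G" using subgroup.mem_carrier[OF sp] .
lemma cm[intro]: "x \<in> Gm \<Longrightarrow> x \<in> carrier G" using subgroup.mem_carrier[OF sm] .
lemma pmul[simp,intro]: "x \<in> Gp \<Longrightarrow> y \<in> Gp \<Longrightarrow> x \<otimes> y \<in> Gp" using subgroup.m_closed[OF sp] .
lemma mmul[simp,intro]: "x \<in> Gm \<Longrightarrow> y \<in> Gm \<Longrightarrow> x \<otimes> y \<in> Gm" using subgroup.m_closed[OF sm] .
lemma pinv[simp,intro]: "x \<in> Gp \<Longrightarrow> inv x \<in> Gp" using subgroup.m_inv_closed[OF sp] .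
lemma minv[simp,intro]: "x \<in> Gm \<Longrightarrow> inv x \<in> Gm" using subgroup.m_inv_closed[OF sm] .
lemma pone[simp,intro]: "\<one> \<in> Gp" using subgroup.one_closed[OF sp] .
lemma mone[simp,intro]: "\<one> \<in> Gm" using subgroup.one_closed[OF sm] .

lemma cancel1: "a \<in> carrier G \<Longrightarrow> inv a \<otimes> b = \<one> \<Longrightarrow> b \<in> carrier G \<Longrightarrow> a = b"
  by (metis inv_equality inv_inv inv_closed)
lemma cancel2: "a \<in> carrier G \<Longrightarrow> b \<otimes> inv a = \<one> \<Longrightarrow> b \<in> carrier G \<Longrightarrow> a = b"
  by (metis inv_equality inv_inv inv_closed inv_comm)

lemma uniq_pm:
  assumes "p \<in> Gp" "p' \<in> Gp" "m \<in> Gm" "m' \<in> Gm" "p \<otimes> m = p' \<otimes> m'"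
  shows "p = p' \<and> m = m'"
proof -
  have e: "inv p' \<otimes> p = m' \<otimes> inv m"
  proof -
    have h: "inv p' \<otimes> (p \<otimes> m) \<otimes> inv m = inv p' \<otimes> p" using assms(1-4) by (simp add: m_assoc cp cm)
    have "inv p' \<otimes> p = inv p' \<otimes> (p' \<otimes> m') \<otimes> inv m" by (subst assms(5)[symmetric]) (rule h[symmetric])
    also have "\<dots> = m' \<otimes> inv m" using assms(1-4) by (simp add: m_assoc[symmetric] cp cm)
    finally show ?thesis .
  qed
  have "inv p' \<otimes> p = \<one>" proof -
    have A: "inv p' \<otimes> p \<in> Gp" and B: "m' \<otimes> inv m \<in> Gm" using assms(1-4) by auto
    from B e have "inv p' \<otimes> p \<in> Gm" by simp
    from triv[OF A this] show ?thesis .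
  qed
  hence 1: "p' = p" using cancel1[OF cp[OF assms(2)] _ cp[OF assms(1)]] by blast
  hence "p \<otimes> m = p \<otimes> m'" using assms(5) by simp
  hence "m = m'" using assms l_cancel[of p m m'] by auto
  with 1 show ?thesis by simp
qed

lemma uniq_mp:
  assumes "m \<in> Gm" "m' \<in> Gm" "p \<in> Gp" "p' \<in> Gp" "m \<otimes> p = m' \<otimes> p'"
  shows "m = m' \<and> p = p'"
proof -
  have e: "inv m' \<otimes> m = p' \<otimes> inv p"
  proof -
    have h: "inv m' \<otimes> (m \<otimes> p) \<otimes> inv p = inv m' \<otimes> m" using assms(1-4) by (simp add: m_assoc cp cm)
    have "inv m' \<otimes> m = inv m' \<otimes> (m' \<otimes> p') \<otimes> inv p" by (subst assms(5)[symmetric]) (rule h[symmetric])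
    also have "\<dots> = p' \<otimes> inv p" using assms(1-4) by (simp add: m_assoc[symmetric] cp cm)
    finally show ?thesis .
  qed
  have "inv m' \<otimes> m = \<one>" proof -
    have A: "inv m' \<otimes> m \<in> Gm" and B: "p' \<otimes> inv p \<in> Gp" using assms(1-4) by auto
    from B e have "inv m' \<otimes> m \<in> Gp" by simp
    from triv[OF this A] show ?thesis .
  qed
  hence 1: "m' = m" using cancel1[OF cm[OF assms(2)] _ cm[OF assms(1)]] by blast
  hence "m \<otimes> p = m \<otimes> p'" using assms(5) by simp
  hence "p = p'" using assms l_cancel[of m p p'] by auto
  with 1 show ?thesis by simp
qed

lemma ex_mp: assumes "g \<in> carrier G" shows "\<exists>m\<in>Gm. \<exists>p\<in>Gp. g = m \<otimes> p"
proof -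
  obtain p m where "p \<in> Gp" "m \<in> Gm" "inv g = p \<otimes> m" using ex[of "inv g"] assms by auto
  hence "g = inv m \<otimes> inv p" using assms by (metis inv_inv inv_mult_group cp cm)
  thus ?thesis using \<open>p \<in> Gp\<close> \<open>m \<in> Gm\<close> by blast
qed

lemma the_mp:
  assumes "m \<in> Gm" "p \<in> Gp" "g = m \<otimes> p"
  shows "(THE pr. fst pr \<in> Gm \<and> snd pr \<in> Gp \<and> g = fst pr \<otimes> snd pr) = (m, p)"
  using assms uniq_mp by (intro the_equality) force+

lemma the_pm:
  assumes "m \<in> Gm" "p \<in> Gp" "g = p \<otimes> m"
  shows "(THE pr. fst pr \<in> Gp \<and> snd pr \<in> Gm \<and> g = fst pr \<otimes> snd pr) = (p, m)"
  using assms uniq_pm by (intro the_equality) force+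

abbreviation "lpm \<equiv> lact_pm G Gp Gm"
abbreviation "rpm \<equiv> ract_pm G Gp Gm"
abbreviation "lmp \<equiv> lact_mp G Gp Gm"
abbreviation "rmp \<equiv> ract_mp G Gp Gm"

lemma pm_eq: assumes "u \<otimes> x = m \<otimes> p" "m \<in> Gm" "p \<in> Gp"
  shows "lpm u x = m" "rpm u x = p"
  using the_mp[OF assms(2,3) assms(1)] unfolding lact_pm_def ract_pm_def by simp_all

lemma mp_eq: assumes "x \<otimes> u = p \<otimes> m" "m \<in> Gm" "p \<in> Gp"
  shows "lmp x u = p" "rmp x u = m"
  using the_pm[OF assms(2,3) assms(1)] unfolding lact_mp_def ract_mp_def by simp_all

lemma pm: assumes "u \<in> Gp" "x \<in> Gm"
  shows "lpm u x \<in> Gm" "rpm u x \<in> Gp" "u \<otimes> x = lpm u x \<otimes> rpm u x"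
proof -
  obtain m p where "m \<in> Gm" "p \<in> Gp" "u \<otimes> x = m \<otimes> p" using ex_mp[of "u \<otimes> x"] assms by auto
  thus "lpm u x \<in> Gm" "rpm u x \<in> Gp" "u \<otimes> x = lpm u x \<otimes> rpm u x" using pm_eq by auto
qed

lemma mp: assumes "u \<in> Gp" "x \<in> Gm"
  shows "lmp x u \<in> Gp" "rmp x u \<in> Gm" "x \<otimes> u = lmp x u \<otimes> rmp x u"
proof -
  obtain m p where "m \<in> Gm" "p \<in> Gp" "x \<otimes> u = p \<otimes> m" using ex[of "x \<otimes> u"] assms by auto
  thus "lmp x u \<in> Gp" "rmp x u \<in> Gm" "x \<otimes> u = lmp x u \<otimes> rmp x u" using mp_eq by auto
qed

lemma inv_mp: assumes "u \<in> Gp" "x \<in> Gm"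
  shows "lmp (inv x) (inv u) = inv (rpm u x)" "rmp (inv x) (inv u) = inv (lpm u x)"
proof -
  have "inv x \<otimes> inv u = inv (rpm u x) \<otimes> inv (lpm u x)"
    using pm[OF assms] assms by (metis inv_mult_group cp cm)
  thus "lmp (inv x) (inv u) = inv (rpm u x)" "rmp (inv x) (inv u) = inv (lpm u x)"
    using mp_eq pm[OF assms] by auto
qed

lemma inv_pm: assumes "u \<in> Gp" "x \<in> Gm"
  shows "lpm (inv u) (inv x) = inv (rmp x u)" "rpm (inv u) (inv x) = inv (lmp x u)"
proof -
  have "inv u \<otimes> inv x = inv (rmp x u) \<otimes> inv (lmp x u)"
    using mp[OF assms] assms by (metis inv_mult_group cp cm)
  thus "lpm (inv u) (inv x) = inv (rmp x u)" "rpm (inv u) (inv x) = inv (lmp x u)"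
    using pm_eq mp[OF assms] by auto
qed


lemma inv_cancel1[simp]: "x \<in> carrier G \<Longrightarrow> y \<in> carrier G \<Longrightarrow> inv x \<otimes> (x \<otimes> y) = y"
  by (simp add: m_assoc[symmetric])
lemma inv_cancel2[simp]: "x \<in> carrier G \<Longrightarrow> y \<in> carrier G \<Longrightarrow> x \<otimes> (inv x \<otimes> y) = y"
  by (simp add: m_assoc[symmetric])

lemma inv_swap: "a \<in> carrier G \<Longrightarrow> b \<in> carrier G \<Longrightarrow> c \<in> carrier G \<Longrightarrow> d \<in> carrier G \<Longrightarrow>
   inv b \<otimes> inv a = inv d \<otimes> inv c \<Longrightarrow> a \<otimes> b = c \<otimes> d"
  by (metis inv_mult_group inv_inv m_closed)

end

locale UFH = UF +
  fixes \<phi>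
  assumes phi_mem[intro,simp]: "u \<in> Gp \<Longrightarrow> \<phi> u \<in> Gm"
    and phi_mult: "u \<in> Gp \<Longrightarrow> v \<in> Gp \<Longrightarrow> \<phi> (u \<otimes> v) = \<phi> u \<otimes> \<phi> v"
begin

lemma phi_one[simp]: "\<phi> \<one> = \<one>"
proof -
  have "\<phi> \<one> \<otimes> \<phi> \<one> = \<phi> \<one> \<otimes> \<one>" using phi_mult[of \<one> \<one>] cm[OF phi_mem[OF pone]] by simp
  thus ?thesis using l_cancel cm[OF phi_mem[OF pone]] by (metis one_closed)
qed

lemma phi_inv: "u \<in> Gp \<Longrightarrow> \<phi> (inv u) = inv (\<phi> u)"
proof -
  assume u: "u \<in> Gp"
  have "\<phi> (inv u) \<otimes> \<phi> u = \<one>" using phi_mult[of "inv u" u] u by (simp add: cp)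
  thus ?thesis using u by (metis inv_equality cm phi_mem pinv)
qed

lemma eq4: "(\<forall>u\<in>Gp. \<forall>x\<in>Gm. \<phi> (lmp x u) \<otimes> rmp x u = x \<otimes> \<phi> u) \<longleftrightarrow>
            (\<forall>u\<in>Gp. \<forall>x\<in>Gm. lpm u x \<otimes> \<phi> (rpm u x) = \<phi> u \<otimes> x)"
proof safe
  fix u x assume H: "\<forall>u\<in>Gp. \<forall>x\<in>Gm. \<phi> (lmp x u) \<otimes> rmp x u = x \<otimes> \<phi> u" and u: "u \<in> Gp" and x: "x \<in> Gm"
  have "\<phi> (lmp (inv x) (inv u)) \<otimes> rmp (inv x) (inv u) = inv x \<otimes> \<phi> (inv u)" using H u x by auto
  hence eq: "inv (\<phi> (rpm u x)) \<otimes> inv (lpm u x) = inv x \<otimes> inv (\<phi> u)"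
    using inv_mp[OF u x] phi_inv pm[OF u x] u by simp
  show "lpm u x \<otimes> \<phi> (rpm u x) = \<phi> u \<otimes> x" by (rule inv_swap[OF _ _ _ _ eq]) (use pm[OF u x] u x in \<open>auto intro: cm cp\<close>)
next
  fix u x assume H: "\<forall>u\<in>Gp. \<forall>x\<in>Gm. lpm u x \<otimes> \<phi> (rpm u x) = \<phi> u \<otimes> x" and u: "u \<in> Gp" and x: "x \<in> Gm"
  have "lpm (inv u) (inv x) \<otimes> \<phi> (rpm (inv u) (inv x)) = \<phi> (inv u) \<otimes> inv x" using H u x by auto
  hence eq: "inv (rmp x u) \<otimes> inv (\<phi> (lmp x u)) = inv (\<phi> u) \<otimes> inv x"
    using inv_pm[OF u x] phi_inv mp[OF u x] u by simp
  show "\<phi> (lmp x u) \<otimes> rmp x u = x \<otimes> \<phi> u" by (rule inv_swap[OF _ _ _ _ eq]) (use mp[OF u x] u x in \<open>auto intro: cm cp\<close>)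
qed

definition Q where "Q = {u \<otimes> inv (\<phi> u) | u. u \<in> Gp}"

lemma Q_alt: "{u \<otimes> \<phi> (inv u) | u. u \<in> Gp} = Q"
  unfolding Q_def by (auto simp: phi_inv) (metis phi_inv)

lemma Q_mem: "u \<in> Gp \<Longrightarrow> u \<otimes> inv (\<phi> u) \<in> Q" unfolding Q_def by auto

lemma Q_char: assumes "p \<in> Gp" "m \<in> Gm" "p \<otimes> m \<in> Q" shows "m = inv (\<phi> p)"
proof -
  obtain u where u: "u \<in> Gp" "p \<otimes> m = u \<otimes> inv (\<phi> u)" using assms(3) unfolding Q_def by auto
  from uniq_pm[OF assms(1) u(1) assms(2) _ u(2)] u(1) show ?thesis by auto
qed

lemma Q_sub: "Q \<subseteq> carrier G" unfolding Q_def by (fastforce intro: m_closed inv_closed cp cm)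

lemma B: assumes "Q \<lhd> G" shows "\<forall>u\<in>Gp. \<forall>x\<in>Gm. \<phi> (lmp x u) \<otimes> rmp x u = x \<otimes> \<phi> u"
proof safe
  fix u x assume u: "u \<in> Gp" and x: "x \<in> Gm"
  note c = cp[OF u] cm[OF x] cm[OF phi_mem[OF u]] cp[OF mp(1)[OF u x]] cm[OF mp(2)[OF u x]]
    cm[OF phi_mem[OF mp(1)[OF u x]]]
  have "x \<otimes> (u \<otimes> inv (\<phi> u)) \<otimes> inv x \<in> Q" using normal.inv_op_closed2[OF assms] Q_mem[OF u] x by auto
  also have "x \<otimes> (u \<otimes> inv (\<phi> u)) \<otimes> inv x = lmp x u \<otimes> (rmp x u \<otimes> inv (\<phi> u) \<otimes> inv x)"
    using mp(3)[OF u x] c by (simp add: m_assoc[symmetric])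
  finally have "rmp x u \<otimes> inv (\<phi> u) \<otimes> inv x = inv (\<phi> (lmp x u))"
    using Q_char mp[OF u x] u x by auto
  hence "\<phi> (lmp x u) \<otimes> (rmp x u \<otimes> inv (\<phi> u) \<otimes> inv x) \<otimes> (x \<otimes> \<phi> u) = \<phi> (lmp x u) \<otimes> inv (\<phi> (lmp x u)) \<otimes> (x \<otimes> \<phi> u)"
    by simp
  thus "\<phi> (lmp x u) \<otimes> rmp x u = x \<otimes> \<phi> u" using c by (simp add: m_assoc)
qed


lemma prod:
  assumes H4: "\<forall>u\<in>Gp. \<forall>x\<in>Gm. \<phi> (lmp x u) \<otimes> rmp x u = x \<otimes> \<phi> u"
    and u: "u \<in> Gp" and v1: "v1 \<in> Gp"
  defines "v \<equiv> lmp (inv (\<phi> u)) v1"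
  shows "v \<in> Gp" "lmp (\<phi> u) v = v1"
    "(u \<otimes> inv (\<phi> u)) \<otimes> (v1 \<otimes> inv (\<phi> v1)) = (u \<otimes> v) \<otimes> inv (\<phi> (u \<otimes> v))"
proof -
  define y where "y = inv (\<phi> u)"
  define r where "r = rmp y v1"
  have y: "y \<in> Gm" unfolding y_def using u by auto
  have vy: "v = lmp y v1" unfolding v_def y_def ..
  note m = mp[OF v1 y, folded vy r_def]
  show v: "v \<in> Gp" using m by simp
  note c = cp[OF u] cp[OF v1] cm[OF y] cm[OF m(2)] cp[OF v] cm[OF phi_mem[OF u]] cm[OF phi_mem[OF v1]]
    cm[OF phi_mem[OF v]]
  have "\<phi> u \<otimes> (y \<otimes> v1) \<otimes> inv r = \<phi> u \<otimes> (v \<otimes> r) \<otimes> inv r" using m(3) by simp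
  hence e1: "\<phi> u \<otimes> v = v1 \<otimes> inv r" using c by (simp add: m_assoc y_def)
  have l: "lmp (\<phi> u) v = v1" and rr: "rmp (\<phi> u) v = inv r" using mp_eq[OF e1] m(2) v1 by auto
  thus "lmp (\<phi> u) v = v1" by simp
  have h: "\<phi> v1 \<otimes> inv r = \<phi> u \<otimes> \<phi> v" using H4 v u l rr by force
  have "inv (\<phi> (u \<otimes> v)) = inv (\<phi> v1 \<otimes> inv r)" using h phi_mult[OF u v] by simp
  also have "\<dots> = r \<otimes> inv (\<phi> v1)" using c by (simp add: inv_mult_group)
  finally have e2: "inv (\<phi> (u \<otimes> v)) = r \<otimes> inv (\<phi> v1)" .
  have "(u \<otimes> inv (\<phi> u)) \<otimes> (v1 \<otimes> inv (\<phi> v1)) = u \<otimes> (y \<otimes> v1) \<otimes> inv (\<phi> v1)"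
    using c by (simp add: m_assoc y_def)
  also have "\<dots> = u \<otimes> (v \<otimes> r) \<otimes> inv (\<phi> v1)" using m(3) by simp
  also have "\<dots> = (u \<otimes> v) \<otimes> inv (\<phi> (u \<otimes> v))" using c e2 by (simp add: m_assoc)
  finally show "(u \<otimes> inv (\<phi> u)) \<otimes> (v1 \<otimes> inv (\<phi> v1)) = (u \<otimes> v) \<otimes> inv (\<phi> (u \<otimes> v))" .
qed

lemma A:
  assumes H4: "\<forall>u\<in>Gp. \<forall>x\<in>Gm. \<phi> (lmp x u) \<otimes> rmp x u = x \<otimes> \<phi> u"
  shows "Q \<lhd> G"
proof -
  have mult: "a \<otimes> b \<in> Q" if ab: "a \<in> Q" "b \<in> Q" for a b
  proof -
    obtain u v1 where "u \<in> Gp" "v1 \<in> Gp" "a = u \<otimes> inv (\<phi> u)" "b = v1 \<otimes> inv (\<phi> v1)"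
      using ab unfolding Q_def by blast
    thus ?thesis using prod[OF H4, of u v1] Q_mem by auto
  qed
  have invc: "inv a \<in> Q" if ab: "a \<in> Q" for a
  proof -
    obtain u where u: "u \<in> Gp" "a = u \<otimes> inv (\<phi> u)" using ab unfolding Q_def by auto
    have iu: "inv u \<in> Gp" using u by simp
    note m = mp[OF iu phi_mem[OF u(1)]]
    have "inv a = \<phi> u \<otimes> inv u" using u by (simp add: inv_mult_group cp cm)
    also have "\<dots> = lmp (\<phi> u) (inv u) \<otimes> rmp (\<phi> u) (inv u)" using m by simp
    also have "rmp (\<phi> u) (inv u) = inv (\<phi> (lmp (\<phi> u) (inv u)))"
    proof -
      have "\<phi> (lmp (\<phi> u) (inv u)) \<otimes> rmp (\<phi> u) (inv u) = \<phi> u \<otimes> \<phi> (inv u)"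
        using H4 iu u by auto
      also have "\<dots> = \<one>" using phi_mult[OF u(1) iu] u by (simp add: cp)
      finally have e: "\<phi> (lmp (\<phi> u) (inv u)) \<otimes> rmp (\<phi> u) (inv u) = \<one>" .
      have c1: "\<phi> (lmp (\<phi> u) (inv u)) \<in> carrier G" using m by auto
      have c2: "rmp (\<phi> u) (inv u) \<in> carrier G" using m by auto
      have "rmp (\<phi> u) (inv u) \<otimes> \<phi> (lmp (\<phi> u) (inv u)) = \<one>" using inv_comm[OF e c1 c2] .
      from inv_equality[OF this c1 c2] show ?thesis by simp
    qed
    finally show ?thesis using Q_mem m by simp
  qed
  have sg: "subgroup Q G"
    by (rule subgroupI) (use Q_sub mult invc Q_mem[OF pone] in auto)
  have conjm: "x \<otimes> h \<otimes> inv x \<in> Q" if x: "x \<in> Gm" and h: "h \<in> Q" for x h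
  proof -
    obtain u where u: "u \<in> Gp" "h = u \<otimes> inv (\<phi> u)" using h unfolding Q_def by auto
    note m = mp[OF u(1) x]
    note c = cp[OF u(1)] cm[OF x] cm[OF phi_mem[OF u(1)]] cp[OF m(1)] cm[OF m(2)]
      cm[OF phi_mem[OF m(1)]]
    have h4: "\<phi> (lmp x u) \<otimes> rmp x u = x \<otimes> \<phi> u" using H4 u x by auto
    have r: "rmp x u = inv (\<phi> (lmp x u)) \<otimes> (x \<otimes> \<phi> u)"
    proof -
      have "inv (\<phi> (lmp x u)) \<otimes> (\<phi> (lmp x u) \<otimes> rmp x u) = inv (\<phi> (lmp x u)) \<otimes> (x \<otimes> \<phi> u)"
        using h4 by simp
      thus ?thesis using c by simp
    qed
    have "x \<otimes> h \<otimes> inv x = (x \<otimes> u) \<otimes> inv (\<phi> u) \<otimes> inv x"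
      using u c by (simp add: m_assoc)
    also have "\<dots> = lmp x u \<otimes> rmp x u \<otimes> inv (\<phi> u) \<otimes> inv x" using m(3) by simp
    also have "\<dots> = lmp x u \<otimes> inv (\<phi> (lmp x u))" using c r by (simp add: m_assoc)
    finally show ?thesis using Q_mem m by simp
  qed
  have "x \<otimes> h \<otimes> inv x \<in> Q" if x: "x \<in> carrier G" and h: "h \<in> Q" for x h
  proof -
    obtain p m where pm: "p \<in> Gp" "m \<in> Gm" "x = p \<otimes> m" using ex[OF x] by auto
    define a where "a = p \<otimes> inv (\<phi> p)"
    define y where "y = \<phi> p \<otimes> m"
    have a: "a \<in> Q" unfolding a_def using Q_mem pm by simp
    have y: "y \<in> Gm" unfolding y_def using pm by simp
    note c = cp[OF pm(1)] cm[OF pm(2)] cm[OF phi_mem[OF pm(1)]] cm[OF y] subsetD[OF Q_sub h]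
      subsetD[OF Q_sub a]
    have "x = a \<otimes> y" unfolding a_def y_def pm(3) using c by (simp add: m_assoc)
    hence "x \<otimes> h \<otimes> inv x = a \<otimes> (y \<otimes> h \<otimes> inv y) \<otimes> inv a" using c by (simp add: m_assoc inv_mult_group)
    moreover have "y \<otimes> h \<otimes> inv y \<in> Q" using conjm y h by simp
    ultimately show ?thesis using mult invc a by simp
  qed
  thus ?thesis using sg normal_inv_iff by auto
qed


end

lemma (in UF) inv_eqD: "a \<in> carrier G \<Longrightarrow> b \<in> carrier G \<Longrightarrow> inv a = inv b \<Longrightarrow> a = b"
  by (metis inv_inv)

locale UF2 = X: UFH G Gp Gm \<xi> + E: UFH G Gp Gm \<eta> for G (structure) and Gp Gm \<xi> \<eta>
begin

abbreviation "lpm \<equiv> lact_pm G Gp Gm"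
abbreviation "rpm \<equiv> ract_pm G Gp Gm"
abbreviation "lmp \<equiv> lact_mp G Gp Gm"
abbreviation "rmp \<equiv> ract_mp G Gp Gm"

lemma eq1: "(\<forall>u\<in>Gp. \<forall>v\<in>Gp. rmp (\<xi> u) v = \<xi> (rpm u (\<eta> v))) \<longleftrightarrow>
            (\<forall>u\<in>Gp. \<forall>v\<in>Gp. lpm v (\<xi> u) = \<xi> (lmp (\<eta> v) u))"
proof safe
  fix u v assume H: "\<forall>u\<in>Gp. \<forall>v\<in>Gp. rmp (\<xi> u) v = \<xi> (rpm u (\<eta> v))" and u: "u \<in> Gp" and v: "v \<in> Gp"
  have "rmp (\<xi> (inv u)) (inv v) = \<xi> (rpm (inv u) (\<eta> (inv v)))" using H u v by simp
  hence eq: "inv (lpm v (\<xi> u)) = inv (\<xi> (lmp (\<eta> v) u))"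
    using u v X.phi_inv E.phi_inv X.inv_mp[OF v X.phi_mem[OF u]] X.inv_pm[OF u E.phi_mem[OF v]] X.mp[OF u E.phi_mem[OF v]] by simp
  show "lpm v (\<xi> u) = \<xi> (lmp (\<eta> v) u)" by (rule X.inv_eqD[OF _ _ eq]) (use X.pm[OF v X.phi_mem[OF u]] X.mp[OF u E.phi_mem[OF v]] in \<open>auto intro: X.cp X.cm\<close>)
next
  fix u v assume H: "\<forall>u\<in>Gp. \<forall>v\<in>Gp. lpm v (\<xi> u) = \<xi> (lmp (\<eta> v) u)" and u: "u \<in> Gp" and v: "v \<in> Gp"
  have "lpm (inv v) (\<xi> (inv u)) = \<xi> (lmp (\<eta> (inv v)) (inv u))" using H u v by simp
  hence eq: "inv (rmp (\<xi> u) v) = inv (\<xi> (rpm u (\<eta> v)))"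
    using u v X.phi_inv E.phi_inv X.inv_pm[OF v X.phi_mem[OF u]] X.inv_mp[OF u E.phi_mem[OF v]] X.pm[OF u E.phi_mem[OF v]] by simp
  show "rmp (\<xi> u) v = \<xi> (rpm u (\<eta> v))" by (rule X.inv_eqD[OF _ _ eq]) (use X.mp[OF v X.phi_mem[OF u]] X.pm[OF u E.phi_mem[OF v]] in \<open>auto intro: X.cp X.cm\<close>)
qed

lemma eq2: "(\<forall>u\<in>Gp. \<forall>v\<in>Gp. lpm u (\<eta> v) = \<eta> (lmp (\<xi> u) v)) \<longleftrightarrow>
            (\<forall>u\<in>Gp. \<forall>v\<in>Gp. rmp (\<eta> v) u = \<eta> (rpm v (\<xi> u)))"
proof safe
  fix u v assume H: "\<forall>u\<in>Gp. \<forall>v\<in>Gp. lpm u (\<eta> v) = \<eta> (lmp (\<xi> u) v)" and u: "u \<in> Gp" and v: "v \<in> Gp"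
  have "lpm (inv u) (\<eta> (inv v)) = \<eta> (lmp (\<xi> (inv u)) (inv v))" using H u v by simp
  hence eq: "inv (rmp (\<eta> v) u) = inv (\<eta> (rpm v (\<xi> u)))"
    using u v X.phi_inv E.phi_inv X.inv_pm[OF u E.phi_mem[OF v]] X.inv_mp[OF v X.phi_mem[OF u]] X.pm[OF v X.phi_mem[OF u]] by simp
  show "rmp (\<eta> v) u = \<eta> (rpm v (\<xi> u))" by (rule X.inv_eqD[OF _ _ eq]) (use X.mp[OF u E.phi_mem[OF v]] X.pm[OF v X.phi_mem[OF u]] in \<open>auto intro: X.cp X.cm\<close>)
next
  fix u v assume H: "\<forall>u\<in>Gp. \<forall>v\<in>Gp. rmp (\<eta> v) u = \<eta> (rpm v (\<xi> u))" and u: "u \<in> Gp" and v: "v \<in> Gp"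
  have "rmp (\<eta> (inv v)) (inv u) = \<eta> (rpm (inv v) (\<xi> (inv u)))" using H u v by simp
  hence eq: "inv (lpm u (\<eta> v)) = inv (\<eta> (lmp (\<xi> u) v))"
    using u v X.phi_inv E.phi_inv X.inv_mp[OF u E.phi_mem[OF v]] X.inv_pm[OF v X.phi_mem[OF u]] X.mp[OF v X.phi_mem[OF u]] by simp
  show "lpm u (\<eta> v) = \<eta> (lmp (\<xi> u) v)" by (rule X.inv_eqD[OF _ _ eq]) (use X.pm[OF u E.phi_mem[OF v]] X.mp[OF v X.phi_mem[OF u]] in \<open>auto intro: X.cp X.cm\<close>)
qed

lemma eq3: "(\<forall>u\<in>Gp. \<forall>v\<in>Gp. u \<otimes> v = lmp (\<xi> u) v \<otimes> rpm u (\<eta> v)) \<longleftrightarrow>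
            (\<forall>u\<in>Gp. \<forall>v\<in>Gp. u \<otimes> v = lmp (\<eta> u) v \<otimes> rpm u (\<xi> v))"
proof safe
  fix u v assume H: "\<forall>u\<in>Gp. \<forall>v\<in>Gp. u \<otimes> v = lmp (\<xi> u) v \<otimes> rpm u (\<eta> v)" and u: "u \<in> Gp" and v: "v \<in> Gp"
  have "inv v \<otimes> inv u = lmp (\<xi> (inv v)) (inv u) \<otimes> rpm (inv v) (\<eta> (inv u))" using H u v by simp
  hence eq: "inv v \<otimes> inv u = inv (rpm u (\<xi> v)) \<otimes> inv (lmp (\<eta> u) v)"
    using u v X.phi_inv E.phi_inv X.inv_mp[OF u X.phi_mem[OF v]] X.inv_pm[OF v E.phi_mem[OF u]] by simp
  show "u \<otimes> v = lmp (\<eta> u) v \<otimes> rpm u (\<xi> v)"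
    by (rule X.inv_swap[OF _ _ _ _ eq]) (use u v X.mp[OF v E.phi_mem[OF u]] X.pm[OF u X.phi_mem[OF v]] in \<open>auto intro: X.cp X.cm\<close>)
next
  fix u v assume H: "\<forall>u\<in>Gp. \<forall>v\<in>Gp. u \<otimes> v = lmp (\<eta> u) v \<otimes> rpm u (\<xi> v)" and u: "u \<in> Gp" and v: "v \<in> Gp"
  have "inv v \<otimes> inv u = lmp (\<eta> (inv v)) (inv u) \<otimes> rpm (inv v) (\<xi> (inv u))" using H u v by simp
  hence eq: "inv v \<otimes> inv u = inv (rpm u (\<eta> v)) \<otimes> inv (lmp (\<xi> u) v)"
    using u v X.phi_inv E.phi_inv X.inv_mp[OF u E.phi_mem[OF v]] X.inv_pm[OF v X.phi_mem[OF u]] by simp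
  show "u \<otimes> v = lmp (\<xi> u) v \<otimes> rpm u (\<eta> v)"
    by (rule X.inv_swap[OF _ _ _ _ eq]) (use u v X.mp[OF v X.phi_mem[OF u]] X.pm[OF u E.phi_mem[OF v]] in \<open>auto intro: X.cp X.cm\<close>)
qed

lemma one_from: assumes H3: "\<forall>u\<in>Gp. \<forall>v\<in>Gp. u \<otimes> v = lmp (\<xi> u) v \<otimes> rpm u (\<eta> v)"
  and H4: "\<forall>u\<in>Gp. \<forall>x\<in>Gm. \<xi> (lmp x u) \<otimes> rmp x u = x \<otimes> \<xi> u"
  shows "\<forall>u\<in>Gp. \<forall>v\<in>Gp. rmp (\<xi> u) v = \<xi> (rpm u (\<eta> v))"
proof safe
  fix u v assume u: "u \<in> Gp" and v: "v \<in> Gp"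
  note m = X.mp[OF v X.phi_mem[OF u]] and p = X.pm[OF u E.phi_mem[OF v]]
  have "\<xi> (lmp (\<xi> u) v) \<otimes> rmp (\<xi> u) v = \<xi> u \<otimes> \<xi> v" using H4 u v by auto
  also have "\<dots> = \<xi> (u \<otimes> v)" using X.phi_mult u v by simp
  also have "\<dots> = \<xi> (lmp (\<xi> u) v) \<otimes> \<xi> (rpm u (\<eta> v))" using H3 u v X.phi_mult m p by simp
  finally show "rmp (\<xi> u) v = \<xi> (rpm u (\<eta> v))" using X.l_cancel[of "\<xi> (lmp (\<xi> u) v)" "rmp (\<xi> u) v" "\<xi> (rpm u (\<eta> v))"] m p by (auto intro: X.cm)
qed


lemma fwd:
  assumes N: "X.Q \<lhd> G"
    and Fm: "\<And>a b. a \<in> X.Q \<Longrightarrow> b \<in> X.Q \<Longrightarrow> F (a \<otimes> b) = F a \<otimes> F b"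
    and Fd: "\<And>u. u \<in> Gp \<Longrightarrow> F (u \<otimes> inv (\<xi> u)) = \<eta> u \<otimes> inv u"
    and u: "u \<in> Gp" and v: "v \<in> Gp"
  shows "lpm u (\<eta> v) = \<eta> (lmp (\<xi> u) v) \<and> u \<otimes> v = lmp (\<xi> u) v \<otimes> rpm u (\<eta> v)"
proof -
  note m = X.mp[OF v X.phi_mem[OF u]]
  define v1 where "v1 = lmp (\<xi> u) v"
  define r where "r = rmp (\<xi> u) v"
  have v1: "v1 \<in> Gp" and r: "r \<in> Gm" and e0: "\<xi> u \<otimes> v = v1 \<otimes> r" using m unfolding v1_def r_def by auto
  note c = X.cp[OF u] X.cp[OF v] X.cp[OF v1] X.cm[OF r] X.cm[OF X.phi_mem[OF u]] X.cm[OF X.phi_mem[OF v1]]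
    X.cm[OF E.phi_mem[OF u]] X.cm[OF E.phi_mem[OF v]] X.cm[OF E.phi_mem[OF v1]]
  define a where "a = u \<otimes> inv (\<xi> u)"
  define b where "b = v1 \<otimes> inv (\<xi> v1)"
  have a: "a \<in> X.Q" and b: "b \<in> X.Q" unfolding a_def b_def using X.Q_mem u v1 by auto
  have "inv (\<xi> u) \<otimes> (\<xi> u \<otimes> v) \<otimes> inv r = inv (\<xi> u) \<otimes> (v1 \<otimes> r) \<otimes> inv r" using e0 by simp
  hence e1: "v \<otimes> inv r = inv (\<xi> u) \<otimes> v1" using c by (simp add: X.m_assoc)
  have ab: "a \<otimes> b = (u \<otimes> v) \<otimes> (inv r \<otimes> inv (\<xi> v1))"
  proof -
    have "a \<otimes> b = u \<otimes> (inv (\<xi> u) \<otimes> v1) \<otimes> inv (\<xi> v1)" unfolding a_def b_def using c by (simp add: X.m_assoc)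
    also have "\<dots> = u \<otimes> (v \<otimes> inv r) \<otimes> inv (\<xi> v1)" using e1 by simp
    also have "\<dots> = (u \<otimes> v) \<otimes> (inv r \<otimes> inv (\<xi> v1))" using c by (simp add: X.m_assoc)
    finally show ?thesis .
  qed
  have "a \<otimes> b \<in> X.Q" using a b N by (simp add: normal_def subgroup.m_closed)
  then obtain w where w: "w \<in> Gp" "a \<otimes> b = w \<otimes> inv (\<xi> w)" unfolding X.Q_def by blast
  have "u \<otimes> v = w" using X.uniq_pm[of "u \<otimes> v" w "inv r \<otimes> inv (\<xi> v1)" "inv (\<xi> w)"] ab w u v r v1 by auto
  hence "F (a \<otimes> b) = \<eta> (u \<otimes> v) \<otimes> inv (u \<otimes> v)" using Fd w by simp
  moreover have "F (a \<otimes> b) = \<eta> u \<otimes> inv u \<otimes> (\<eta> v1 \<otimes> inv v1)" using Fm[OF a b] Fd u v1 unfolding a_def b_def by simp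
  ultimately have "\<eta> u \<otimes> (\<eta> v \<otimes> (inv v \<otimes> inv u)) = \<eta> u \<otimes> (inv u \<otimes> (\<eta> v1 \<otimes> inv v1))"
    using c E.phi_mult[OF u v] by (simp add: X.m_assoc X.inv_mult_group)
  hence "\<eta> v \<otimes> (inv v \<otimes> inv u) = inv u \<otimes> (\<eta> v1 \<otimes> inv v1)" using c by simp
  hence "u \<otimes> (\<eta> v \<otimes> (inv v \<otimes> inv u)) \<otimes> (u \<otimes> v) = u \<otimes> (inv u \<otimes> (\<eta> v1 \<otimes> inv v1)) \<otimes> (u \<otimes> v)" by simp
  hence e2: "u \<otimes> \<eta> v = \<eta> v1 \<otimes> (inv v1 \<otimes> (u \<otimes> v))" using c by (simp add: X.m_assoc)
  have l: "lpm u (\<eta> v) = \<eta> v1" and rr: "rpm u (\<eta> v) = inv v1 \<otimes> (u \<otimes> v)"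
    using X.pm_eq[OF e2] v1 u v by auto
  show ?thesis using l rr c unfolding v1_def[symmetric] by simp
qed

lemma bwd:
  assumes H2: "\<forall>u\<in>Gp. \<forall>v\<in>Gp. lpm u (\<eta> v) = \<eta> (lmp (\<xi> u) v)"
    and H3: "\<forall>u\<in>Gp. \<forall>v\<in>Gp. u \<otimes> v = lmp (\<xi> u) v \<otimes> rpm u (\<eta> v)"
    and H4: "\<forall>u\<in>Gp. \<forall>x\<in>Gm. \<xi> (lmp x u) \<otimes> rmp x u = x \<otimes> \<xi> u"
    and Fd: "\<And>u. u \<in> Gp \<Longrightarrow> F (u \<otimes> inv (\<xi> u)) = \<eta> u \<otimes> inv u"
    and a: "a \<in> X.Q" and b: "b \<in> X.Q"
  shows "F (a \<otimes> b) = F a \<otimes> F b"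
proof -
  obtain u v1 where u: "u \<in> Gp" and v1: "v1 \<in> Gp" and ad: "a = u \<otimes> inv (\<xi> u)" and bd: "b = v1 \<otimes> inv (\<xi> v1)"
    using a b unfolding X.Q_def by blast
  define v where "v = lmp (inv (\<xi> u)) v1"
  note P = X.prod[OF H4 u v1, folded v_def]
  have v: "v \<in> Gp" using P by simp
  note c = X.cp[OF u] X.cp[OF v] X.cp[OF v1] X.cm[OF X.phi_mem[OF u]] X.cm[OF X.phi_mem[OF v1]]
    X.cm[OF E.phi_mem[OF u]] X.cm[OF E.phi_mem[OF v]] X.cm[OF E.phi_mem[OF v1]]
  note p = X.pm[OF u E.phi_mem[OF v]]
  have l: "lpm u (\<eta> v) = \<eta> v1" using H2 u v P by auto
  have h3: "u \<otimes> v = v1 \<otimes> rpm u (\<eta> v)" using H3 u v P by auto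
  have rr: "rpm u (\<eta> v) = inv v1 \<otimes> (u \<otimes> v)"
  proof -
    have "inv v1 \<otimes> (u \<otimes> v) = inv v1 \<otimes> (v1 \<otimes> rpm u (\<eta> v))" using h3 by simp
    thus ?thesis using c X.cp[OF p(2)] by simp
  qed
  have e: "u \<otimes> \<eta> v = \<eta> v1 \<otimes> (inv v1 \<otimes> (u \<otimes> v))" using p l rr by simp
  have e': "\<eta> v1 \<otimes> inv v1 = u \<otimes> (\<eta> v \<otimes> (inv v \<otimes> inv u))"
  proof -
    have "(\<eta> v1 \<otimes> (inv v1 \<otimes> (u \<otimes> v))) \<otimes> (inv v \<otimes> inv u) = (u \<otimes> \<eta> v) \<otimes> (inv v \<otimes> inv u)" using e by simp
    thus ?thesis using c by (simp add: X.m_assoc)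
  qed
  have "F (a \<otimes> b) = \<eta> (u \<otimes> v) \<otimes> inv (u \<otimes> v)" using P(3) Fd u v ad bd by simp
  also have "\<dots> = \<eta> u \<otimes> (inv u \<otimes> (u \<otimes> (\<eta> v \<otimes> (inv v \<otimes> inv u))))"
    using c E.phi_mult[OF u v] by (simp add: X.m_assoc X.inv_mult_group)
  also have "\<dots> = \<eta> u \<otimes> inv u \<otimes> (\<eta> v1 \<otimes> inv v1)" using c e' by (simp add: X.m_assoc)
  also have "\<dots> = F a \<otimes> F b" using Fd u v1 ad bd by simp
  finally show ?thesis .
qed


lemma P2_eq: "{\<eta> (inv u) \<otimes> u | u. u \<in> Gp} = (\<lambda>x. inv x) ` E.Q"
proof
  show "{\<eta> (inv u) \<otimes> u | u. u \<in> Gp} \<subseteq> (\<lambda>x. inv x) ` E.Q"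
  proof
    fix z assume "z \<in> {\<eta> (inv u) \<otimes> u | u. u \<in> Gp}"
    then obtain u where u: "u \<in> Gp" "z = \<eta> (inv u) \<otimes> u" by blast
    have "z = inv (inv u \<otimes> inv (\<eta> (inv u)))" using u X.cp[OF u(1)] X.cm[OF E.phi_mem[OF X.pinv[OF u(1)]]]
      by (simp add: X.inv_mult_group)
    moreover have "inv u \<otimes> inv (\<eta> (inv u)) \<in> E.Q" using E.Q_mem u by simp
    ultimately show "z \<in> (\<lambda>x. inv x) ` E.Q" by blast
  qed
next
  show "(\<lambda>x. inv x) ` E.Q \<subseteq> {\<eta> (inv u) \<otimes> u | u. u \<in> Gp}"
  proof
    fix z assume "z \<in> (\<lambda>x. inv x) ` E.Q"
    then obtain w where w: "w \<in> Gp" "z = inv (w \<otimes> inv (\<eta> w))" unfolding E.Q_def by blast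
    have "z = \<eta> (inv (inv w)) \<otimes> inv w" using w X.cp[OF w(1)] X.cm[OF E.phi_mem[OF w(1)]]
      by (simp add: X.inv_mult_group)
    thus "z \<in> {\<eta> (inv u) \<otimes> u | u. u \<in> Gp}" using w by blast
  qed
qed

lemma sg_inv: "subgroup H G \<Longrightarrow> (\<lambda>x. inv x) ` H = H"
proof -
  assume H: "subgroup H G"
  show "(\<lambda>x. inv x) ` H = H"
  proof
    show "(\<lambda>x. inv x) ` H \<subseteq> H" using subgroup.m_inv_closed[OF H] by blast
    show "H \<subseteq> (\<lambda>x. inv x) ` H"
    proof
      fix h assume h: "h \<in> H"
      hence "h = inv (inv h)" using subgroup.mem_carrier[OF H h] by simp
      thus "h \<in> (\<lambda>x. inv x) ` H" using subgroup.m_inv_closed[OF H h] by blast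
    qed
  qed
qed

lemma inv_inv_img: "S \<subseteq> carrier G \<Longrightarrow> (\<lambda>x. inv x) ` (\<lambda>x. inv x) ` S = S"
  by (auto simp: image_image subset_iff intro!: image_eqI)

lemma Fd_conv: assumes "\<forall>u\<in>Gp. F (u \<otimes> \<xi> (inv u)) = \<eta> u \<otimes> inv u"
  shows "\<And>u. u \<in> Gp \<Longrightarrow> F (u \<otimes> inv (\<xi> u)) = \<eta> u \<otimes> inv u"
  using assms X.phi_inv by simp

lemma main_iff:
  assumes Fd: "\<And>u. u \<in> Gp \<Longrightarrow> F (u \<otimes> inv (\<xi> u)) = \<eta> u \<otimes> inv u"
  defines "P2 \<equiv> {\<eta> (inv u) \<otimes> u | u. u \<in> Gp}"
  shows "((X.Q \<lhd> G \<and> P2 \<lhd> G) \<and> F \<in> iso (G\<lparr>carrier := X.Q\<rparr>) (G\<lparr>carrier := P2\<rparr>))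
     \<longleftrightarrow>
     ((\<forall>u\<in>Gp. \<forall>v\<in>Gp. rmp (\<xi> u) v = \<xi> (rpm u (\<eta> v))) \<and>
      (\<forall>u\<in>Gp. \<forall>v\<in>Gp. lpm u (\<eta> v) = \<eta> (lmp (\<xi> u) v)) \<and>
      (\<forall>u\<in>Gp. \<forall>v\<in>Gp. u \<otimes> v = lmp (\<xi> u) v \<otimes> rpm u (\<eta> v)) \<and>
      (\<forall>u\<in>Gp. \<forall>x\<in>Gm. \<xi> (lmp x u) \<otimes> rmp x u = x \<otimes> \<xi> u) \<and>
      (\<forall>u\<in>Gp. \<forall>x\<in>Gm. \<eta> (lmp x u) \<otimes> rmp x u = x \<otimes> \<eta> u))"
proof
  assume L: "(X.Q \<lhd> G \<and> P2 \<lhd> G) \<and> F \<in> iso (G\<lparr>carrier := X.Q\<rparr>) (G\<lparr>carrier := P2\<rparr>)"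
  have H4: "\<forall>u\<in>Gp. \<forall>x\<in>Gm. \<xi> (lmp x u) \<otimes> rmp x u = x \<otimes> \<xi> u" using X.B L by blast
  have "(\<lambda>x. inv x) ` P2 = P2" using L sg_inv normal_imp_subgroup by blast
  moreover have "(\<lambda>x. inv x) ` P2 = E.Q" unfolding P2_def P2_eq using inv_inv_img E.Q_sub by blast
  ultimately have "E.Q = P2" by simp
  hence H5: "\<forall>u\<in>Gp. \<forall>x\<in>Gm. \<eta> (lmp x u) \<otimes> rmp x u = x \<otimes> \<eta> u" using E.B L by simp
  have Fm: "\<And>a b. a \<in> X.Q \<Longrightarrow> b \<in> X.Q \<Longrightarrow> F (a \<otimes> b) = F a \<otimes> F b"
    using L unfolding iso_def hom_def by auto
  have H23: "\<forall>u\<in>Gp. \<forall>v\<in>Gp. lpm u (\<eta> v) = \<eta> (lmp (\<xi> u) v) \<and> u \<otimes> v = lmp (\<xi> u) v \<otimes> rpm u (\<eta> v)"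
    using fwd[OF _ Fm Fd] L by blast
  have H3: "\<forall>u\<in>Gp. \<forall>v\<in>Gp. u \<otimes> v = lmp (\<xi> u) v \<otimes> rpm u (\<eta> v)" using H23 by blast
  show "(\<forall>u\<in>Gp. \<forall>v\<in>Gp. rmp (\<xi> u) v = \<xi> (rpm u (\<eta> v))) \<and>
      (\<forall>u\<in>Gp. \<forall>v\<in>Gp. lpm u (\<eta> v) = \<eta> (lmp (\<xi> u) v)) \<and>
      (\<forall>u\<in>Gp. \<forall>v\<in>Gp. u \<otimes> v = lmp (\<xi> u) v \<otimes> rpm u (\<eta> v)) \<and>
      (\<forall>u\<in>Gp. \<forall>x\<in>Gm. \<xi> (lmp x u) \<otimes> rmp x u = x \<otimes> \<xi> u) \<and>
      (\<forall>u\<in>Gp. \<forall>x\<in>Gm. \<eta> (lmp x u) \<otimes> rmp x u = x \<otimes> \<eta> u)"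
    using one_from[OF H3 H4] H23 H4 H5 by blast
next
  assume R: "(\<forall>u\<in>Gp. \<forall>v\<in>Gp. rmp (\<xi> u) v = \<xi> (rpm u (\<eta> v))) \<and>
      (\<forall>u\<in>Gp. \<forall>v\<in>Gp. lpm u (\<eta> v) = \<eta> (lmp (\<xi> u) v)) \<and>
      (\<forall>u\<in>Gp. \<forall>v\<in>Gp. u \<otimes> v = lmp (\<xi> u) v \<otimes> rpm u (\<eta> v)) \<and>
      (\<forall>u\<in>Gp. \<forall>x\<in>Gm. \<xi> (lmp x u) \<otimes> rmp x u = x \<otimes> \<xi> u) \<and>
      (\<forall>u\<in>Gp. \<forall>x\<in>Gm. \<eta> (lmp x u) \<otimes> rmp x u = x \<otimes> \<eta> u)"
  have N1: "X.Q \<lhd> G" using X.A R by blast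
  have N2: "E.Q \<lhd> G" using E.A R by blast
  have "P2 = E.Q" unfolding P2_def P2_eq using sg_inv N2 normal_imp_subgroup by blast
  hence N2': "P2 \<lhd> G" using N2 by simp
  have Fin: "F a \<in> P2" if a: "a \<in> X.Q" for a
  proof -
    obtain u where u: "u \<in> Gp" "a = u \<otimes> inv (\<xi> u)" using a unfolding X.Q_def by blast
    have "F a = \<eta> (inv (inv u)) \<otimes> inv u" using Fd u X.cp[OF u(1)] by simp
    thus ?thesis unfolding P2_def using u by blast
  qed
  have Fm: "F (a \<otimes> b) = F a \<otimes> F b" if "a \<in> X.Q" "b \<in> X.Q" for a b
  proof -
    have h2: "\<forall>u\<in>Gp. \<forall>v\<in>Gp. lpm u (\<eta> v) = \<eta> (lmp (\<xi> u) v)" using R by (elim conjE)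
    have h3: "\<forall>u\<in>Gp. \<forall>v\<in>Gp. u \<otimes> v = lmp (\<xi> u) v \<otimes> rpm u (\<eta> v)" using R by (elim conjE)
    have h4: "\<forall>u\<in>Gp. \<forall>x\<in>Gm. \<xi> (lmp x u) \<otimes> rmp x u = x \<otimes> \<xi> u" using R by (elim conjE)
    show ?thesis by (rule bwd[OF h2 h3 h4 Fd that])
  qed
  have inj: "inj_on F X.Q"
  proof
    fix a b assume a: "a \<in> X.Q" and b: "b \<in> X.Q" and e: "F a = F b"
    obtain u where u: "u \<in> Gp" "a = u \<otimes> inv (\<xi> u)" using a unfolding X.Q_def by blast
    obtain v where v: "v \<in> Gp" "b = v \<otimes> inv (\<xi> v)" using b unfolding X.Q_def by blast
    have "\<eta> u \<otimes> inv u = \<eta> v \<otimes> inv v" using e Fd u v by simp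
    hence "inv u = inv v" using X.uniq_mp[OF E.phi_mem[OF u(1)] E.phi_mem[OF v(1)] X.pinv[OF u(1)] X.pinv[OF v(1)]] by simp
    from X.inv_eqD[OF X.cp[OF u(1)] X.cp[OF v(1)] this] have "u = v" .
    thus "a = b" using u v by simp
  qed
  have surj: "F ` X.Q = P2"
  proof
    show "F ` X.Q \<subseteq> P2" using Fin by blast
    show "P2 \<subseteq> F ` X.Q"
    proof
      fix z assume "z \<in> P2"
      then obtain u where u: "u \<in> Gp" "z = \<eta> (inv u) \<otimes> u" unfolding P2_def by blast
      have "F (inv u \<otimes> inv (\<xi> (inv u))) = z" using Fd[of "inv u"] u X.cp[OF u(1)] by simp
      moreover have "inv u \<otimes> inv (\<xi> (inv u)) \<in> X.Q" using X.Q_mem u by simp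
      ultimately show "z \<in> F ` X.Q" by blast
    qed
  qed
  have "F \<in> iso (G\<lparr>carrier := X.Q\<rparr>) (G\<lparr>carrier := P2\<rparr>)"
    unfolding iso_def hom_def bij_betw_def using Fin Fm inj surj by auto
  thus "(X.Q \<lhd> G \<and> P2 \<lhd> G) \<and> F \<in> iso (G\<lparr>carrier := X.Q\<rparr>) (G\<lparr>carrier := P2\<rparr>)"
    using N1 N2' by simp
qed

end

theorem proposition1:
  fixes G (structure) and Gp Gm :: "'g set" and \<xi> \<eta> F :: "'g \<Rightarrow> 'g"
  assumes grp: "group G" and fin: "finite (carrier G)"
    and uf: "unique_factorization G Gp Gm"
    and xi_hom: "\<xi> \<in> hom (G\<lparr>carrier := Gp\<rparr>) (G\<lparr>carrier := Gm\<rparr>)"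
    and eta_hom: "\<eta> \<in> hom (G\<lparr>carrier := Gp\<rparr>) (G\<lparr>carrier := Gm\<rparr>)"
    and F_def: "\<forall>u\<in>Gp. F (u \<otimes> \<xi> (inv u)) = \<eta> u \<otimes> inv u"
  shows
   "(let Gp' = {u \<otimes> \<xi> (inv u) | u. u \<in> Gp};
         Gp'' = {\<eta> (inv u) \<otimes> u | u. u \<in> Gp}
     in ((Gp' \<lhd> G \<and> Gp'' \<lhd> G) \<and> F \<in> iso (G\<lparr>carrier := Gp'\<rparr>) (G\<lparr>carrier := Gp''\<rparr>))
     \<longleftrightarrow>
     ((\<forall>u\<in>Gp. \<forall>v\<in>Gp. ract_mp G Gp Gm (\<xi> u) v = \<xi> (ract_pm G Gp Gm u (\<eta> v))) \<and>
      (\<forall>u\<in>Gp. \<forall>v\<in>Gp. lact_pm G Gp Gm u (\<eta> v) = \<eta> (lact_mp G Gp Gm (\<xi> u) v)) \<and>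
      (\<forall>u\<in>Gp. \<forall>v\<in>Gp. u \<otimes> v = lact_mp G Gp Gm (\<xi> u) v \<otimes> ract_pm G Gp Gm u (\<eta> v)) \<and>
      (\<forall>u\<in>Gp. \<forall>x\<in>Gm. \<xi> (lact_mp G Gp Gm x u) \<otimes> ract_mp G Gp Gm x u = x \<otimes> \<xi> u) \<and>
      (\<forall>u\<in>Gp. \<forall>x\<in>Gm. \<eta> (lact_mp G Gp Gm x u) \<otimes> ract_mp G Gp Gm x u = x \<otimes> \<eta> u)))
   \<and>
   ((\<forall>u\<in>Gp. \<forall>v\<in>Gp. ract_mp G Gp Gm (\<xi> u) v = \<xi> (ract_pm G Gp Gm u (\<eta> v)))
      \<longleftrightarrow> (\<forall>u\<in>Gp. \<forall>v\<in>Gp. lact_pm G Gp Gm v (\<xi> u) = \<xi> (lact_mp G Gp Gm (\<eta> v) u)))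
   \<and>
   ((\<forall>u\<in>Gp. \<forall>v\<in>Gp. lact_pm G Gp Gm u (\<eta> v) = \<eta> (lact_mp G Gp Gm (\<xi> u) v))
      \<longleftrightarrow> (\<forall>u\<in>Gp. \<forall>v\<in>Gp. ract_mp G Gp Gm (\<eta> v) u = \<eta> (ract_pm G Gp Gm v (\<xi> u))))
   \<and>
   ((\<forall>u\<in>Gp. \<forall>v\<in>Gp. u \<otimes> v = lact_mp G Gp Gm (\<xi> u) v \<otimes> ract_pm G Gp Gm u (\<eta> v))
      \<longleftrightarrow> (\<forall>u\<in>Gp. \<forall>v\<in>Gp. u \<otimes> v = lact_mp G Gp Gm (\<eta> u) v \<otimes> ract_pm G Gp Gm u (\<xi> v)))
   \<and>
   ((\<forall>u\<in>Gp. \<forall>x\<in>Gm. \<xi> (lact_mp G Gp Gm x u) \<otimes> ract_mp G Gp Gm x u = x \<otimes> \<xi> u)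
      \<longleftrightarrow> (\<forall>u\<in>Gp. \<forall>x\<in>Gm. lact_pm G Gp Gm u x \<otimes> \<xi> (ract_pm G Gp Gm u x) = \<xi> u \<otimes> x))
   \<and>
   ((\<forall>u\<in>Gp. \<forall>x\<in>Gm. \<eta> (lact_mp G Gp Gm x u) \<otimes> ract_mp G Gp Gm x u = x \<otimes> \<eta> u)
      \<longleftrightarrow> (\<forall>u\<in>Gp. \<forall>x\<in>Gm. lact_pm G Gp Gm u x \<otimes> \<eta> (ract_pm G Gp Gm u x) = \<eta> u \<otimes> x))"
proof -
  interpret grp: group G by (rule grp)
  have sp: "subgroup Gp G" and sm: "subgroup Gm G"
    and uq: "\<forall>g\<in>carrier G. \<exists>!p. fst p \<in> Gp \<and> snd p \<in> Gm \<and> g = fst p \<otimes> snd p"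
    using uf unfolding unique_factorization_def by auto
  have triv: "z = \<one>" if z: "z \<in> Gp" "z \<in> Gm" for z
  proof -
    have zc: "z \<in> carrier G" using subgroup.mem_carrier[OF sp z(1)] .
    have 1: "\<one> \<in> Gp" "\<one> \<in> Gm" using subgroup.one_closed[OF sp] subgroup.one_closed[OF sm] by auto
    have e1: "z = z \<otimes> \<one>" "z = \<one> \<otimes> z" using zc by simp_all
    have P1: "fst (z, \<one>) \<in> Gp \<and> snd (z, \<one>) \<in> Gm \<and> z = fst (z, \<one>) \<otimes> snd (z, \<one>)"
      using z 1 e1 by simp
    have P2: "fst (\<one>, z) \<in> Gp \<and> snd (\<one>, z) \<in> Gm \<and> z = fst (\<one>, z) \<otimes> snd (\<one>, z)"
      using z 1 e1 by simp
    have "(z, \<one>) = (\<one>, z)"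
      using trans[OF sym[OF the1_equality[OF bspec[OF uq zc] P1]] the1_equality[OF bspec[OF uq zc] P2]] .
    hence "fst (z, \<one>) = fst (\<one>, z)" by (rule arg_cong)
    thus ?thesis by (simp only: fst_conv)
  qed
  have ex: "\<exists>p\<in>Gp. \<exists>m\<in>Gm. g = p \<otimes> m" if g: "g \<in> carrier G" for g
  proof -
    obtain p where p: "fst p \<in> Gp \<and> snd p \<in> Gm \<and> g = fst p \<otimes> snd p"
      using ex1_implies_ex[OF bspec[OF uq g]] by blast
    have a: "fst p \<in> Gp" and b: "snd p \<in> Gm" and c: "g = fst p \<otimes> snd p" using p by simp_all
    show ?thesis using a b c by blast
  qed
  have xi1: "\<And>u. u \<in> Gp \<Longrightarrow> \<xi> u \<in> Gm"
    and xi2: "\<And>u v. u \<in> Gp \<Longrightarrow> v \<in> Gp \<Longrightarrow> \<xi> (u \<otimes> v) = \<xi> u \<otimes> \<xi> v"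
    using xi_hom unfolding hom_def by auto
  have eta1: "\<And>u. u \<in> Gp \<Longrightarrow> \<eta> u \<in> Gm"
    and eta2: "\<And>u v. u \<in> Gp \<Longrightarrow> v \<in> Gp \<Longrightarrow> \<eta> (u \<otimes> v) = \<eta> u \<otimes> \<eta> v"
    using eta_hom unfolding hom_def by auto
  have U: "UF G Gp Gm" by (rule UF.intro[OF grp UF_axioms.intro[OF sp sm triv ex]])
  have UX: "UFH G Gp Gm \<xi>" by (rule UFH.intro[OF U UFH_axioms.intro[OF xi1 xi2]])
  have UE: "UFH G Gp Gm \<eta>" by (rule UFH.intro[OF U UFH_axioms.intro[OF eta1 eta2]])
  interpret UF2 G Gp Gm \<xi> \<eta> by (rule UF2.intro[OF UX UE])
  have Q1: "{u \<otimes> \<xi> (inv u) | u. u \<in> Gp} = X.Q" by (rule X.Q_alt)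
  have Fd: "\<And>u. u \<in> Gp \<Longrightarrow> F (u \<otimes> inv (\<xi> u)) = \<eta> u \<otimes> inv u" using Fd_conv[OF F_def] .
  show ?thesis
    unfolding Let_def Q1
    by (intro conjI main_iff[OF Fd] eq1 eq2 eq3 X.eq4 E.eq4)
qed

end
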